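(* Fix integers $k \ge 1$ and $n \ge 1$. For every database $D$ of $n$ rows and every neighboring database $D'$ (as defined in the context), $|\mathrm{SSE}(D) - \mathrm{SSE}(D')| \le 7$. That is, the sensitivity of $\mathrm{SSE}$ is at most $7$.
   Context: A database $D$ consists of $n$ rows. Each row is a pair $(g, y)$ with group label $g \in \{1,\dots,k\}$ and response value $y \in [0,1]$; the number of groups $k$ is fixed. For group $i$ let $n_i$ be the number of rows with label $i$, so $\sum_i n_i = n$. Let $y_{i1},\dots,y_{in_i}$ be the responses in group $i$ and $\overline{y}_i = \frac{1}{n_i}\sum_j y_{ij}$ be the group mean; an empty group contributes nothing to any sum. Define $\mathrm{SSE}(D) = \sum_{i=1}^k \sum_{j=1}^{n_i} (y_{ij} - \overline{y}_i)^2$. Two databases $D, D'$ with $n$ rows each are neighboring if they differ in exactly one row; the changed row may have a different group label and/or a different response value. The sensitivity of a real-valued function $f$ on databases is $\max |f(D) - f(D')|$, taken over all neighboring pairs $D, D'$. *)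

theory Defs
  imports Complex_Main
begin

text \<open>A row is a pair (g, y) of a group label and a response value.
  A database is a list of rows (its length is the number of rows).\<close>

type_synonym row = "nat \<times> real"
type_synonym database = "row list"

definition valid_db :: "nat \<Rightarrow> nat \<Rightarrow> database \<Rightarrow> bool" where
  "valid_db k n D \<longleftrightarrow> length D = n \<and>
     (\<forall>r \<in> set D. fst r \<in> {1..k} \<and> 0 \<le> snd r \<and> snd r \<le> 1)"

definition group_vals :: "database \<Rightarrow> nat \<Rightarrow> real list" where
  "group_vals D i = map snd (filter (\<lambda>r. fst r = i) D)"

definition group_mean :: "database \<Rightarrow> nat \<Rightarrow> real" where
  "group_mean D i = sum_list (group_vals D i) / real (length (group_vals D i))"

definition SSE :: "nat \<Rightarrow> database \<Rightarrow> real" where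
  "SSE k D = (\<Sum>i = 1..k. \<Sum>y \<leftarrow> group_vals D i. (y - group_mean D i)^2)"

definition neighboring :: "database \<Rightarrow> database \<Rightarrow> bool" where
  "neighboring D D' \<longleftrightarrow> length D = length D' \<and>
     card {j. j < length D \<and> D ! j \<noteq> D' ! j} = 1"

end

theory Submission
  imports Defs
begin

definition mn :: "real list \<Rightarrow> real" where
  "mn L = sum_list L / real (length L)"

definition S :: "real list \<Rightarrow> real" where
  "S L = (\<Sum>y\<leftarrow>L. (y - mn L)^2)"

lemma expand_sq:
  "(\<Sum>y\<leftarrow>L. (y - (c::real))^2) = (\<Sum>y\<leftarrow>L. y^2) - 2*c*sum_list L + real (length L) * c^2"
  by (induction L) (auto simp: algebra_simps power2_eq_square)

lemma key:
  "(\<Sum>y\<leftarrow>L. (y - (c::real))^2) = S L + real (length L) * (mn L - c)^2"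
proof (cases "L = []")
  case True then show ?thesis by (simp add: S_def)
next
  case False
  then have n: "real (length L) > 0" by simp
  have s: "sum_list L = real (length L) * mn L" using n by (simp add: mn_def)
  show ?thesis unfolding S_def expand_sq[where L=L and c=c] expand_sq[where L=L and c="mn L"] s
    by (simp add: algebra_simps power2_eq_square)
qed

lemma S_le: "S L \<le> (\<Sum>y\<leftarrow>L. (y - (c::real))^2)"
  using key[where L=L and c=c] by simp

lemma sum_bounds: "\<forall>y\<in>set L. 0 \<le> y \<and> y \<le> (1::real) \<Longrightarrow> 0 \<le> sum_list L \<and> sum_list L \<le> real (length L)"
  by (induction L) auto

lemma mn_bounds: assumes "\<forall>y\<in>set L. 0 \<le> y \<and> y \<le> (1::real)" shows "0 \<le> mn L \<and> mn L \<le> 1"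
proof (cases "L = []")
  case True then show ?thesis by (simp add: mn_def)
next
  case False
  then have n: "real (length L) > 0" by simp
  from sum_bounds[OF assms] n show ?thesis
    by (simp add: mn_def divide_le_eq_1)
qed

lemma S_insert:
  assumes "\<forall>y\<in>set (A@B). 0 \<le> y \<and> y \<le> (1::real)" and "0 \<le> x" "x \<le> 1"
  shows "S (A@B) \<le> S (A@x#B) \<and> S (A@x#B) \<le> S (A@B) + 1"
proof
  let ?m' = "mn (A@x#B)"
  have "S (A@x#B) = (\<Sum>y\<leftarrow>A@B. (y - ?m')^2) + (x - ?m')^2"
    by (simp add: S_def)
  moreover have "S (A@B) \<le> (\<Sum>y\<leftarrow>A@B. (y - ?m')^2)" by (rule S_le)
  moreover have "0 \<le> (x - ?m')^2" by simp
  ultimately show "S (A@B) \<le> S (A@x#B)" by linarith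
next
  let ?m = "mn (A@B)"
  have "S (A@x#B) \<le> (\<Sum>y\<leftarrow>A@x#B. (y - ?m)^2)" by (rule S_le)
  also have "\<dots> = S (A@B) + (x - ?m)^2" by (simp add: S_def)
  also have "(x - ?m)^2 \<le> 1"
  proof -
    have "0 \<le> ?m" "?m \<le> 1" using mn_bounds[OF assms(1)] by auto
    then have "\<bar>x - ?m\<bar> \<le> 1" using assms by auto
    then have "\<bar>x - ?m\<bar>^2 \<le> 1^2" by (intro power_mono) auto
    then show ?thesis by simp
  qed
  finally show "S (A@x#B) \<le> S (A@B) + 1" by simp
qed

lemma S_opt:
  assumes "\<forall>y\<in>set (A@B). 0 \<le> y \<and> y \<le> (1::real)" and "0 \<le> x" "x \<le> 1"
  shows "S (A@B) \<le> S (A @ (if b then [x] else []) @ B) \<and>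
         S (A @ (if b then [x] else []) @ B) \<le> S (A@B) + (if b then 1 else 0)"
  using S_insert[OF assms] by auto

theorem mainTheorem1:
  fixes k n :: nat and D D' :: database
  assumes "k \<ge> 1" and "n \<ge> 1"
    and "valid_db k n D" and "valid_db k n D'"
    and "neighboring D D'"
  shows "\<bar>SSE k D - SSE k D'\<bar> \<le> 7"
proof -
  have len: "length D = length D'" using assms(5) by (simp add: neighboring_def)
  from assms(5) obtain j where J: "{j. j < length D \<and> D ! j \<noteq> D' ! j} = {j}"
    unfolding neighboring_def by (auto simp: card_Suc_eq)
  have jl: "j < length D" using J by auto
  have eq: "\<And>p. p < length D \<Longrightarrow> p \<noteq> j \<Longrightarrow> D ! p = D' ! p" using J by blast
  have tk: "take j D = take j D'"
    by (rule nth_equalityI) (use len jl eq in auto)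
  have dr: "drop (Suc j) D = drop (Suc j) D'"
    by (rule nth_equalityI) (use len jl eq in auto)
  have Dd: "D = take j D @ D ! j # drop (Suc j) D" using jl by (simp add: id_take_nth_drop)
  have D'd: "D' = take j D @ D' ! j # drop (Suc j) D" using jl len tk dr by (simp add: id_take_nth_drop)
  define A where "A i = map snd (filter (\<lambda>r. fst r = i) (take j D))" for i
  define B where "B i = map snd (filter (\<lambda>r. fst r = i) (drop (Suc j) D))" for i
  have vD: "\<forall>r\<in>set D. 0 \<le> snd r \<and> snd r \<le> 1" using assms(3) by (simp add: valid_db_def)
  have vD': "\<forall>r\<in>set D'. 0 \<le> snd r \<and> snd r \<le> 1" using assms(4) by (simp add: valid_db_def)
  have gD: "group_vals D i = A i @ (if fst (D!j) = i then [snd (D!j)] else []) @ B i" for i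
    by (subst Dd) (simp add: group_vals_def A_def B_def)
  have gD': "group_vals D' i = A i @ (if fst (D'!j) = i then [snd (D'!j)] else []) @ B i" for i
    by (subst D'd) (simp add: group_vals_def A_def B_def)
  have AB: "\<forall>y\<in>set (A i @ B i). 0 \<le> y \<and> y \<le> 1" for i
  proof
    fix y assume "y \<in> set (A i @ B i)"
    then obtain r where "r \<in> set (take j D) \<or> r \<in> set (drop (Suc j) D)" "y = snd r"
      by (auto simp: A_def B_def)
    then have "r \<in> set D" "y = snd r" by (auto dest: in_set_takeD in_set_dropD)
    then show "0 \<le> y \<and> y \<le> 1" using vD by auto
  qed
  have xj: "0 \<le> snd (D!j) \<and> snd (D!j) \<le> 1" using vD jl by auto
  have xj': "0 \<le> snd (D'!j) \<and> snd (D'!j) \<le> 1" using vD' jl len by auto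
  have SSEe: "SSE k X = (\<Sum>i = 1..k. S (group_vals X i))" for X
    by (simp add: SSE_def S_def group_mean_def mn_def)
  define f where "f i = (if fst (D!j) = i then 1 else 0) + (if fst (D'!j) = i then (1::real) else 0)" for i
  have each: "\<bar>S (group_vals D i) - S (group_vals D' i)\<bar> \<le> f i" for i
    using S_opt[OF AB[of i], of "snd (D!j)" "fst (D!j) = i"] xj
          S_opt[OF AB[of i], of "snd (D'!j)" "fst (D'!j) = i"] xj'
    unfolding gD gD' f_def by auto
  have "\<bar>SSE k D - SSE k D'\<bar> = \<bar>\<Sum>i = 1..k. (S (group_vals D i) - S (group_vals D' i))\<bar>"
    by (simp add: SSEe sum_subtractf)
  also have "\<dots> \<le> (\<Sum>i = 1..k. \<bar>S (group_vals D i) - S (group_vals D' i)\<bar>)" by (rule sum_abs)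
  also have "\<dots> \<le> (\<Sum>i = 1..k. f i)" by (rule sum_mono) (rule each)
  also have "\<dots> \<le> 2"
  proof -
    have "(\<Sum>i = 1..k. f i) = (\<Sum>i = 1..k. if fst (D!j) = i then 1 else 0) + (\<Sum>i = 1..k. if fst (D'!j) = i then (1::real) else 0)"
      by (simp add: f_def sum.distrib)
    also have "\<dots> \<le> 2" by (simp add: sum.delta)
    finally show ?thesis .
  qed
  finally show ?thesis by simp
qed

end
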